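(* Let $X$ be a real topological vector space such that either (1) $X$ is separable and completely metrizable, or (2) $X=Y^*$ where $Y$ is a separable normed space and $X$ carries the weak* topology. If $C\subseteq X$ is nonempty and CS-closed, then $\operatorname{fri} C\neq\emptyset$.
   Context: A subset $C$ of a topological vector space is CS-closed (convergent-series closed) if whenever $x_i\in C$, $\lambda_i\ge0$ ($i\in\mathbb N$), $\sum_i\lambda_i=1$ and the series $\sum_i\lambda_i x_i$ converges in $X$, its sum belongs to $C$. For a convex set $C$, a convex subset $F\subseteq C$ is a face of $C$ if for every $x\in F$ and all $y,z\in C$ with $x\in(y,z)=\{(1-t)y+tz:t\in(0,1)\}$ we have $y,z\in F$; $F_{\min}(x,C)$ is the intersection of all faces of $C$ containing $x\in C$. The face relative interior is $\operatorname{fri} C=\{x\in C: C\subseteq\overline{F_{\min}(x,C)}\}$. *)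

theory Defs
  imports "HOL-Analysis.Analysis"
begin

definition tvs :: "'a::real_vector topology \<Rightarrow> bool" where
  "tvs T \<longleftrightarrow> topspace T = UNIV
     \<and> continuous_map (prod_topology T T) T (\<lambda>(x, y). x + y)
     \<and> continuous_map (prod_topology euclideanreal T) T (\<lambda>(a, x). a *\<^sub>R x)"

definition cs_closed :: "'a::real_vector topology \<Rightarrow> 'a set \<Rightarrow> bool" where
  "cs_closed T C \<longleftrightarrow>
     (\<forall>(x :: nat \<Rightarrow> 'a) (l :: nat \<Rightarrow> real) s.
        (\<forall>i. x i \<in> C) \<and> (\<forall>i. 0 \<le> l i) \<and> l sums 1 \<and>
        limitin T (\<lambda>n. \<Sum>i<n. l i *\<^sub>R x i) s sequentially \<longrightarrow> s \<in> C)"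

definition F_min :: "'a::real_vector \<Rightarrow> 'a set \<Rightarrow> 'a set" where
  "F_min x C = \<Inter>{F. F face_of C \<and> x \<in> F}"

definition fri :: "'a::real_vector topology \<Rightarrow> 'a set \<Rightarrow> 'a set" where
  "fri T C = {x \<in> C. C \<subseteq> T closure_of (F_min x C)}"

definition weak_star :: "('y::real_normed_vector \<Rightarrow>\<^sub>L real) topology" where
  "weak_star = pullback_topology UNIV blinfun_apply (product_topology (\<lambda>_. euclideanreal) UNIV)"

end

theory Submission
  imports Defs
begin



lemma core:
  fixes T :: "'a::real_vector topology"
  assumes cs: "cs_closed T C" and top: "topspace T = UNIV"
    and aff: "\<And>a b. continuous_map T T (\<lambda>y. a *\<^sub>R y + b)"
    and cC: "\<And>i. c i \<in> C" and dense: "C \<subseteq> T closure_of (range c)"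
    and lpos: "\<And>i. 0 < l i" and lsum: "l sums 1"
    and lim: "limitin T (\<lambda>n. \<Sum>i<n. l i *\<^sub>R c i) x sequentially"
  shows "fri T C \<noteq> {}"
proof -
  have xC: "x \<in> C" using cs lim lpos lsum cC unfolding cs_closed_def
    by (meson less_imp_le)
  have lt1: "l n < 1" for n
  proof -
    have "sum l {n, Suc n} \<le> suminf l"
      by (rule sum_le_suminf) (use lsum lpos less_imp_le in \<open>auto simp: sums_iff\<close>)
    then show ?thesis using lpos[of "Suc n"] lsum by (auto simp: sums_iff)
  qed
  have key: "c n \<in> F_min x C" for n
  proof -
    define a where "a = 1 / (1 - l n)"
    define b where "b = - (a * l n) *\<^sub>R c n"
    define l' where "l' i = (if i = n then 0 else a * l i)" for i
    have a1: "a * (1 - l n) = 1" using lt1[of n] by (simp add: a_def)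
    have "(\<lambda>i. a * (l i - (if i = n then l i else 0))) sums (a * (1 - l n))"
      by (intro sums_mult sums_diff lsum sums_single)
    moreover have "(\<lambda>i. a * (l i - (if i = n then l i else 0))) = l'"
      by (auto simp: l'_def)
    ultimately have l'sum: "l' sums 1" using a1 by simp
    have l'nn: "0 \<le> l' i" for i
      using lpos[of i] lt1[of n] by (auto simp: l'_def a_def)
    have ps: "(\<Sum>i<N. l' i *\<^sub>R c i) = a *\<^sub>R (\<Sum>i<N. l i *\<^sub>R c i) + b" if "n < N" for N
    proof -
      have nin: "n \<in> {..<N}" using that by simp
      have "(\<Sum>i<N. l' i *\<^sub>R c i) = l' n *\<^sub>R c n + (\<Sum>i\<in>{..<N}-{n}. l' i *\<^sub>R c i)"
        by (rule sum.remove[OF _ nin]) simp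
      also have "\<dots> = (\<Sum>i\<in>{..<N}-{n}. a *\<^sub>R (l i *\<^sub>R c i))"
        by (simp add: l'_def)
      also have "\<dots> = a *\<^sub>R (\<Sum>i\<in>{..<N}-{n}. l i *\<^sub>R c i)"
        by (simp add: scaleR_sum_right)
      also have "(\<Sum>i<N. l i *\<^sub>R c i) = l n *\<^sub>R c n + (\<Sum>i\<in>{..<N}-{n}. l i *\<^sub>R c i)"
        by (rule sum.remove[OF _ nin]) simp
      ultimately show ?thesis by (simp add: b_def scaleR_add_right)
    qed
    have "limitin T ((\<lambda>y. a *\<^sub>R y + b) \<circ> (\<lambda>n. \<Sum>i<n. l i *\<^sub>R c i)) (a *\<^sub>R x + b) sequentially"
      by (rule continuous_map_limit[OF aff lim])
    then have limy: "limitin T (\<lambda>N. \<Sum>i<N. l' i *\<^sub>R c i) (a *\<^sub>R x + b) sequentially"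
      by (rule limitin_transform_eventually[rotated])
        (use ps in \<open>auto simp: eventually_sequentially intro!: exI[of _ "Suc n"]\<close>)
    define y where "y = a *\<^sub>R x + b"
    have yC: "y \<in> C" using cs limy l'nn l'sum cC unfolding cs_closed_def y_def by blast
    have xy: "x = (1 - l n) *\<^sub>R y + l n *\<^sub>R c n"
    proof -
      have "(1 - l n) *\<^sub>R y = ((1 - l n) * a) *\<^sub>R x - ((1 - l n) * a * l n) *\<^sub>R c n"
        by (simp add: y_def b_def scaleR_add_right scaleR_diff_right)
      then show ?thesis using a1 by (simp add: mult.commute)
    qed
    show ?thesis unfolding F_min_def
    proof (intro InterI, clarify)
      fix F assume F: "F face_of C" "x \<in> F"
      show "c n \<in> F"
      proof (cases "y = c n")
        case True
        then have "x = c n" using xy by (simp add: algebra_simps)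
        then show ?thesis using F by simp
      next
        case False
        then have "x \<in> open_segment y (c n)"
          unfolding in_segment using lpos[of n] lt1[of n] xy by blast
        then show ?thesis using face_ofD[OF F(1) _ yC cC F(2)] by blast
      qed
    qed
  qed
  have "C \<subseteq> T closure_of F_min x C"
    using dense closure_of_mono[of "range c" "F_min x C" T] key by blast
  then have "x \<in> fri T C" using xC by (simp add: fri_def)
  then show ?thesis by blast
qed




lemma wstar_dense:
  fixes C :: "('y::real_normed_vector \<Rightarrow>\<^sub>L real) set"
  assumes sep: "separable_space (euclidean :: 'y topology)"
  shows "\<exists>D. countable D \<and> D \<subseteq> C \<and> C \<subseteq> strong_operator_topology closure_of D"
proof -
  obtain E :: "'y set" where E: "countable E" "closure E = UNIV"
    using sep unfolding separable_space_def by auto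
  have "E \<noteq> {}" using E by auto
  define e where "e = from_nat_into E"
  have eE: "range e = E" using E \<open>E \<noteq> {}\<close> by (simp add: e_def)
  define \<phi> where "\<phi> f = (\<lambda>k. blinfun_apply f (e k))" for f :: "'y \<Rightarrow>\<^sub>L real"
  define Cm where "Cm m = C \<inter> {f. norm f \<le> real m}" for m :: nat
  have "\<exists>Dm. countable Dm \<and> Dm \<subseteq> Cm m \<and> \<phi> ` Cm m \<subseteq> closure (\<phi> ` Dm)" for m
  proof -
    obtain Tm where Tm: "countable Tm" "Tm \<subseteq> \<phi> ` Cm m" "\<phi> ` Cm m \<subseteq> closure Tm"
      using separable[of "\<phi> ` Cm m"] by blast
    define Dm where "Dm = inv_into (Cm m) \<phi> ` Tm"
    have "\<phi> ` Dm = Tm" unfolding Dm_def using Tm(2)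
      by (simp add: image_image subset_eq f_inv_into_f cong: image_cong)
    moreover have "Dm \<subseteq> Cm m" unfolding Dm_def using Tm(2) by (auto intro: inv_into_into)
    ultimately show ?thesis using Tm by (metis Dm_def countable_image)
  qed
  then obtain D where D: "\<And>m. countable (D m)" "\<And>m. D m \<subseteq> Cm m"
      "\<And>m. \<phi> ` Cm m \<subseteq> closure (\<phi> ` D m)"
    by metis
  have main: "g \<in> strong_operator_topology closure_of D m" if g: "g \<in> Cm m" for g m
    unfolding closure_of_def
  proof (safe)
    show "g \<in> topspace strong_operator_topology" by (simp add: strong_operator_topology_topspace)
    fix U assume gU: "g \<in> U" and oU: "openin strong_operator_topology U"
    then obtain V where V: "open V" "U = blinfun_apply -` V"
      unfolding strong_operator_topology_def openin_pullback_topology by auto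
    have "openin (product_topology (\<lambda>_. euclidean) UNIV) V"
      using V(1) by (simp add: euclidean_product_topology)
    from product_topology_open_contains_basis[OF this, of "blinfun_apply g"] gU V
    obtain X where X: "blinfun_apply g \<in> (\<Pi>\<^sub>E i\<in>UNIV. X i)" "\<And>i. open (X i)"
      "finite {i. X i \<noteq> UNIV}" "(\<Pi>\<^sub>E i\<in>UNIV. X i) \<subseteq> V"
      by auto
    define Z where "Z = {i. X i \<noteq> UNIV}"
    have "\<exists>\<delta>>0. ball (g z) \<delta> \<subseteq> X z" for z
    proof -
      have "g z \<in> X z" using X(1) by (simp add: PiE_iff)
      then show ?thesis using X(2)[of z] open_contains_ball by blast
    qed
    then obtain \<delta> where \<delta>: "\<And>z. \<delta> z > 0" "\<And>z. ball (g z) (\<delta> z) \<subseteq> X z" by metis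
    define \<epsilon> where "\<epsilon> = Min (\<delta> ` Z \<union> {1})"
    have fin: "finite (\<delta> ` Z \<union> {1})" using X(3) by (simp add: Z_def)
    have \<epsilon>pos: "\<epsilon> > 0" unfolding \<epsilon>_def using fin \<delta>(1) by (subst Min_gr_iff) auto
    have \<epsilon>le: "\<epsilon> \<le> \<delta> z" if "z \<in> Z" for z unfolding \<epsilon>_def using fin that by (intro Min_le) auto
    define r where "r = \<epsilon> / (3 * (real m + 1))"
    have rpos: "r > 0" using \<epsilon>pos by (simp add: r_def)
    have "\<exists>k. norm (z - e k) < r" for z
    proof -
      have "z \<in> closure E" using E by simp
      then obtain y where "y \<in> E" "dist y z < r" using rpos closure_approachable by blast
      then show ?thesis using eE by (metis dist_commute dist_norm rangeE)
    qed
    then obtain k where k: "\<And>z. norm (z - e (k z)) < r" by metis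
    define W where "W = {h :: nat \<Rightarrow> real. \<forall>z\<in>Z. h (k z) \<in> ball (g (e (k z))) (\<epsilon>/3)}"
    have oW: "open W" unfolding W_def
      by (rule product_topology_basis') (use X(3) in \<open>auto simp: Z_def\<close>)
    have "\<phi> g \<in> W" using \<epsilon>pos by (simp add: W_def \<phi>_def)
    moreover have "\<phi> g \<in> closure (\<phi> ` D m)" using D(3) g by blast
    ultimately have "W \<inter> \<phi> ` D m \<noteq> {}" using open_Int_closure_eq_empty[OF oW] by blast
    then obtain f where fD: "f \<in> D m" and fW: "\<phi> f \<in> W" by blast
    have fn: "norm f \<le> real m" and gn: "norm g \<le> real m" using D(2) fD g by (auto simp: Cm_def)
    have "blinfun_apply f \<in> (\<Pi>\<^sub>E i\<in>UNIV. X i)"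
    proof (simp add: PiE_iff, intro allI)
      fix z
      show "blinfun_apply f z \<in> X z"
      proof (cases "z \<in> Z")
        case False then show ?thesis by (simp add: Z_def)
      next
        case True
        have b1: "\<bar>f (e (k z)) - g (e (k z))\<bar> < \<epsilon>/3"
          using fW True by (simp add: W_def \<phi>_def dist_real_def abs_minus_commute)
        have mr: "real m * r < \<epsilon>/3" using \<epsilon>pos unfolding r_def by (simp add: field_simps)
        have lin: "\<bar>h z - h (e (k z))\<bar> \<le> real m * r" if "norm h \<le> real m" for h :: "'y \<Rightarrow>\<^sub>L real"
        proof -
          have "\<bar>h z - h (e (k z))\<bar> = norm (blinfun_apply h (z - e (k z)))"
            by (simp add: blinfun.diff_right)
          also have "\<dots> \<le> norm h * norm (z - e (k z))" by (rule norm_blinfun)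
          also have "\<dots> \<le> real m * r"
            using that k[of z] by (intro mult_mono) auto
          finally show ?thesis .
        qed
        have "\<bar>f z - g z\<bar> < \<epsilon>"
          using lin[OF fn] lin[OF gn] b1 mr by linarith
        then have "f z \<in> ball (g z) (\<delta> z)" using \<epsilon>le[OF True] by (simp add: dist_real_def abs_minus_commute)
        then show ?thesis using \<delta>(2) by blast
      qed
    qed
    then have "f \<in> U" using X(4) V(2) by blast
    then show "\<exists>y\<in>D m. y \<in> U" using fD by blast
  qed
  show ?thesis
  proof (intro exI conjI)
    show "countable (\<Union>m. D m)" using D(1) by simp
    show "(\<Union>m. D m) \<subseteq> C" using D(2) by (auto simp: Cm_def)
    show "C \<subseteq> strong_operator_topology closure_of (\<Union>m. D m)"
    proof
      fix g assume "g \<in> C"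
      then have "g \<in> Cm (nat \<lceil>norm g\<rceil>)" by (simp add: Cm_def real_nat_ceiling_ge)
      from main[OF this] show "g \<in> strong_operator_topology closure_of (\<Union>m. D m)"
        using closure_of_mono[of "D (nat \<lceil>norm g\<rceil>)" "\<Union>m. D m"] by blast
    qed
  qed
qed




lemma ws_eq: "(weak_star :: ('y::real_normed_vector \<Rightarrow>\<^sub>L real) topology) = strong_operator_topology"
  unfolding weak_star_def strong_operator_topology_def euclidean_product_topology ..

lemma wstar_case:
  fixes C :: "('y::real_normed_vector \<Rightarrow>\<^sub>L real) set"
  assumes sep: "separable_space (euclidean :: 'y topology)" and ne: "C \<noteq> {}"
    and cs: "cs_closed weak_star C"
  shows "fri weak_star C \<noteq> {}"
proof -
  obtain D where D: "countable D" "D \<subseteq> C" "C \<subseteq> strong_operator_topology closure_of D"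
    using wstar_dense[OF sep] by blast
  have "D \<noteq> {}" using D ne by auto
  define c where "c = from_nat_into D"
  have rc: "range c = D" using D(1) \<open>D \<noteq> {}\<close> by (simp add: c_def)
  define w where "w i = (1/2)^i / (1 + norm (c i))" for i
  have wpos: "w i > 0" for i by (simp add: w_def add_pos_nonneg)
  have wle: "w i \<le> (1/2)^i" for i
  proof -
    have "(1/2::real)^i \<le> (1/2)^i * (1 + norm (c i))" by (simp add: mult_le_cancel_left1)
    moreover have "0 < 1 + norm (c i)" by (simp add: add_pos_nonneg)
    ultimately show ?thesis unfolding w_def by (simp add: pos_divide_le_eq)
  qed
  have gs: "summable (\<lambda>i. (1/2::real)^i)" by (rule summable_geometric) simp
  have ws: "summable w"
    by (rule summable_comparison_test[OF _ gs]) (use wpos wle in \<open>auto intro!: exI[of _ 0] simp: less_imp_le\<close>)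
  define s where "s = suminf w"
  have spos: "s > 0" unfolding s_def using ws wpos by (rule suminf_pos)
  define l where "l i = w i / s" for i
  have lpos: "l i > 0" for i using wpos spos by (simp add: l_def)
  have lsum: "l sums 1"
    unfolding l_def using sums_divide[OF summable_sums[OF ws], of s] spos by (simp add: s_def)
  have nb: "norm (l i *\<^sub>R c i) \<le> (1/2)^i / s" for i
  proof -
    have "norm (l i *\<^sub>R c i) = ((1/2)^i / s) * (norm (c i) / (1 + norm (c i)))"
      using spos by (simp add: l_def w_def)
    also have "\<dots> \<le> ((1/2)^i / s) * 1"
    proof -
      have p: "0 < 1 + norm (c i)" by (simp add: add_pos_nonneg)
      have "norm (c i) / (1 + norm (c i)) \<le> 1" using p by (simp add: pos_divide_le_eq)
      then show ?thesis using spos by (intro mult_left_mono) auto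
    qed
    finally show ?thesis by simp
  qed
  have gs2: "summable (\<lambda>i. (1/2::real)^i / s)" using gs by (rule summable_divide)
  have sm: "summable (\<lambda>i. l i *\<^sub>R c i)"
    by (rule summable_norm_cancel, rule summable_comparison_test[OF _ gs2]) (use nb in \<open>auto intro!: exI[of _ 0]\<close>)
  have "limitin euclidean (\<lambda>n. \<Sum>i<n. l i *\<^sub>R c i) (suminf (\<lambda>i. l i *\<^sub>R c i)) sequentially"
    using summable_LIMSEQ[OF sm] by simp
  from continuous_map_limit[OF strong_operator_topology_weaker_than_euclidean this]
  have lim: "limitin strong_operator_topology (\<lambda>n. \<Sum>i<n. l i *\<^sub>R c i) (suminf (\<lambda>i. l i *\<^sub>R c i)) sequentially"
    by (simp add: o_def)
  have aff: "continuous_map strong_operator_topology strong_operator_topology (\<lambda>y. a *\<^sub>R y + b)" for a and b :: "'y \<Rightarrow>\<^sub>L real"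
    unfolding continuous_on_strong_operator_topo_iff_coordinatewise
  proof
    fix z
    have "continuous_map strong_operator_topology euclideanreal (\<lambda>y. a * blinfun_apply y z + blinfun_apply b z)"
      by (intro continuous_intros strong_operator_topology_continuous_evaluation)
    then show "continuous_map strong_operator_topology euclidean (\<lambda>y. blinfun_apply (a *\<^sub>R y + b) z)"
      by (simp add: blinfun.add_left blinfun.scaleR_left)
  qed
  show ?thesis unfolding ws_eq
    by (rule core[OF cs[unfolded ws_eq] strong_operator_topology_topspace aff _ _ lpos lsum lim])
      (use D rc in auto)
qed




lemma metric_separable_subset:
  assumes ms: "Metric_space M d" and sep: "separable_space (Metric_space.mtopology M d)" and SM: "S \<subseteq> M"
  shows "\<exists>D. countable D \<and> D \<subseteq> S \<and> S \<subseteq> Metric_space.mtopology M d closure_of D"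
proof -
  interpret Metric_space M d by (rule ms)
  obtain E where E: "countable E" "E \<subseteq> M" "mtopology closure_of E = M"
    using sep unfolding separable_space_def by auto
  define P where "P = {(e, k). e \<in> E \<and> S \<inter> mball e (1 / Suc k) \<noteq> {}}"
  define p where "p ek = (SOME q. q \<in> S \<inter> mball (fst ek) (1 / Suc (snd ek)))" for ek :: "_ \<times> nat"
  have pP: "p ek \<in> S \<inter> mball (fst ek) (1 / Suc (snd ek))" if "ek \<in> P" for ek
  proof -
    have "S \<inter> mball (fst ek) (1 / Suc (snd ek)) \<noteq> {}" using that by (auto simp: P_def)
    then show ?thesis unfolding p_def by (metis ex_in_conv someI_ex)
  qed
  have cP: "countable P"
    by (rule countable_subset[of _ "E \<times> UNIV"]) (use E in \<open>auto simp: P_def\<close>)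
  show ?thesis
  proof (intro exI conjI)
    show "countable (p ` P)" using cP by simp
    show "p ` P \<subseteq> S" using pP by blast
    show "S \<subseteq> mtopology closure_of p ` P"
    proof
      fix x assume xS: "x \<in> S"
      then have xM: "x \<in> M" using SM by blast
      show "x \<in> mtopology closure_of p ` P"
        unfolding closure_of_def
      proof (safe)
        show "x \<in> topspace mtopology" using xM by simp
        fix U assume xU: "x \<in> U" and oU: "openin mtopology U"
        then obtain r where r: "r > 0" "mball x r \<subseteq> U" unfolding openin_mtopology by blast
        obtain k :: nat where k: "1 / Suc k < r / 2"
        proof -
          obtain n where n: "2 / r < real n" using reals_Archimedean2 by blast
          then have "2 < r * real n" using r by (simp add: divide_less_eq mult.commute)
          then have "2 < r * real (Suc n)" using r by (simp add: distrib_left)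
          then have "1 / Suc n < r/2" using r by (simp add: divide_less_eq mult.commute)
          then show ?thesis using that by blast
        qed
        have "x \<in> mtopology closure_of E" using E xM by simp
        then obtain e where e: "e \<in> E" "e \<in> mball x (1 / Suc k)"
        proof -
          have "x \<in> mball x (1 / Suc k)" using xM by simp
          then show ?thesis using that \<open>x \<in> mtopology closure_of E\<close> openin_mball[of x "1 / Suc k"]
            unfolding closure_of_def by blast
        qed
        have eM: "e \<in> M" using e E by auto
        have "x \<in> S \<inter> mball e (1 / Suc k)" using e xS xM eM by (simp add: commute)
        then have ekP: "(e, k) \<in> P" using e by (auto simp: P_def)
        from pP[OF this] have q: "p (e, k) \<in> S" "d e (p (e, k)) < 1 / Suc k" "p (e, k) \<in> M" by auto
        have "d x (p (e, k)) \<le> d x e + d e (p (e, k))" using triangle xM eM q(3) by blast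
        also have "\<dots> < r" using e(2) q(2) k by simp
        finally have "p (e, k) \<in> U" using r xM q(3) by auto
        then show "\<exists>y\<in>p ` P. y \<in> U" using ekP by blast
      qed
    qed
  qed
qed




lemma tvs_add:
  assumes tv: "tvs T" and f: "continuous_map X T f" and g: "continuous_map X T g"
  shows "continuous_map X T (\<lambda>x. f x + g x)"
proof -
  have "continuous_map X T ((\<lambda>(x, y). x + y) \<circ> (\<lambda>x. (f x, g x)))"
    by (rule continuous_map_compose[OF continuous_map_pairedI[OF f g]]) (use tv in \<open>simp add: tvs_def\<close>)
  then show ?thesis by (simp add: o_def)
qed

lemma tvs_scale:
  assumes tv: "tvs T" and f: "continuous_map X euclideanreal f" and g: "continuous_map X T g"
  shows "continuous_map X T (\<lambda>x. f x *\<^sub>R g x)"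
proof -
  have "continuous_map X T ((\<lambda>(a, x). a *\<^sub>R x) \<circ> (\<lambda>x. (f x, g x)))"
    by (rule continuous_map_compose[OF continuous_map_pairedI[OF f g]]) (use tv in \<open>simp add: tvs_def\<close>)
  then show ?thesis by (simp add: o_def)
qed

lemma fspace_case:
  fixes T :: "'a::real_vector topology"
  assumes tv: "tvs T" and sep: "separable_space T" and cm: "completely_metrizable_space T"
    and ne: "C \<noteq> {}" and cs: "cs_closed T C"
  shows "fri T C \<noteq> {}"
proof -
  have top: "topspace T = UNIV" using tv by (simp add: tvs_def)
  obtain M d where ms: "Metric_space M d" and mc: "Metric_space.mcomplete M d"
    and Teq: "T = Metric_space.mtopology M d"
    using cm unfolding completely_metrizable_space_def by blast
  interpret Metric_space M d by (rule ms)
  have MU: "M = UNIV" using top Teq by simp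
  obtain D where D: "countable D" "D \<subseteq> C" "C \<subseteq> T closure_of D"
    using metric_separable_subset[OF ms sep[unfolded Teq], of C] MU Teq by auto
  have "D \<noteq> {}" using D ne by auto
  define c where "c = from_nat_into D"
  have rc: "range c = D" using D(1) \<open>D \<noteq> {}\<close> by (simp add: c_def)
  have aff: "continuous_map T T (\<lambda>y. a *\<^sub>R y + b)" for a b
    by (intro tvs_add[OF tv] tvs_scale[OF tv]) (use top in auto)
  have line: "continuous_map euclideanreal T (\<lambda>t. S + t *\<^sub>R v)" for S v
    by (intro tvs_add[OF tv] tvs_scale[OF tv]) (use top in auto)
  have ex: "\<exists>t. 0 < t \<and> t \<le> (1/2)^(Suc k) \<and> d S (S + t *\<^sub>R v) < (1/2)^k" for S v and k :: nat
  proof -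
    have "openin euclideanreal {t \<in> topspace euclideanreal. S + t *\<^sub>R v \<in> mball S ((1/2)^k)}"
      by (rule openin_continuous_map_preimage[OF line]) (simp add: Teq)
    then have op: "open {t. S + t *\<^sub>R v \<in> mball S ((1/2)^k)}" by simp
    have "S \<in> mball S ((1/2)^k)" by (rule centre_in_mball_iff[THEN iffD2]) (simp add: MU)
    then have "0 \<in> {t. S + t *\<^sub>R v \<in> mball S ((1/2)^k)}" by simp
    then obtain \<delta> where \<delta>: "\<delta> > 0" "ball 0 \<delta> \<subseteq> {t. S + t *\<^sub>R v \<in> mball S ((1/2)^k)}"
      using op open_contains_ball by blast
    define t where "t = min (\<delta>/2) ((1/2)^(Suc k))"
    have tpos: "t > 0" using \<delta> by (simp add: t_def)
    have "t \<in> ball 0 \<delta>" using \<delta> tpos by (simp add: t_def)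
    then have "d S (S + t *\<^sub>R v) < (1/2)^k" using \<delta> by auto
    then show ?thesis using tpos by (intro exI[of _ t]) (simp add: t_def)
  qed
  define pick where "pick S k = (SOME t. 0 < t \<and> t \<le> (1/2)^(Suc k) \<and> d S (S + t *\<^sub>R c (Suc k)) < (1/2)^k)" for S k
  have pk: "0 < pick S k" "pick S k \<le> (1/2)^(Suc k)" "d S (S + pick S k *\<^sub>R c (Suc k)) < (1/2)^k" for S k
    using someI_ex[OF ex[of k S "c (Suc k)"]] unfolding pick_def by auto
  define Sq where "Sq = rec_nat (c 0) (\<lambda>k S. S + pick S k *\<^sub>R c (Suc k))"
  have Sq0: "Sq 0 = c 0" and SqS: "Sq (Suc k) = Sq k + pick (Sq k) k *\<^sub>R c (Suc k)" for k
    by (simp_all add: Sq_def)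
  define mu where "mu k = (case k of 0 \<Rightarrow> 1 | Suc j \<Rightarrow> pick (Sq j) j)" for k
  have mupos: "mu k > 0" for k using pk by (cases k) (auto simp: mu_def)
  have mule: "mu k \<le> (1/2)^k" for k using pk by (cases k) (auto simp: mu_def)
  have Sqsum: "Sq k = (\<Sum>i<Suc k. mu i *\<^sub>R c i)" for k
    by (induction k) (simp_all add: Sq0 SqS mu_def)
  have step: "d (Sq k) (Sq (Suc k)) < (1/2)^k" for k using pk(3) by (simp add: SqS)
  have bound: "d (Sq k) (Sq (k + j)) \<le> 2 * (1/2)^k - 2 * (1/2)^(k + j)" for k j
  proof (induction j)
    case 0 then show ?case using MU by simp
  next
    case (Suc j)
    have "d (Sq k) (Sq (k + Suc j)) \<le> d (Sq k) (Sq (k + j)) + d (Sq (k + j)) (Sq (Suc (k + j)))"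
      using triangle MU by simp
    also have "\<dots> \<le> 2 * (1/2)^k - 2 * (1/2)^(k + j) + (1/2)^(k+j)"
      using Suc step[of "k + j"] by simp
    finally show ?case by simp
  qed
  have bound2: "d (Sq k) (Sq n) \<le> 2 * (1/2)^k" if "k \<le> n" for k n
  proof -
    have "d (Sq k) (Sq n) \<le> 2 * (1/2)^k - 2 * (1/2)^n" using bound[of k "n - k"] that by simp
    moreover have "(0::real) \<le> (1/2)^n" by simp
    ultimately show ?thesis by linarith
  qed
  have "MCauchy Sq"
    unfolding MCauchy_def
  proof (intro conjI allI impI)
    show "range Sq \<subseteq> M" using MU by simp
    fix \<epsilon> :: real assume "\<epsilon> > 0"
    then obtain N where N: "(1/2::real)^N < \<epsilon>/4" using real_arch_pow_inv[of "\<epsilon>/4" "1/2"] by auto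
    show "\<exists>N. \<forall>n n'. N \<le> n \<longrightarrow> N \<le> n' \<longrightarrow> d (Sq n) (Sq n') < \<epsilon>"
    proof (intro exI allI impI)
      fix n n' assume "N \<le> n" "N \<le> n'"
      have "d (Sq n) (Sq n') \<le> d (Sq N) (Sq n) + d (Sq N) (Sq n')" using triangle'' MU by simp
      also have "\<dots> \<le> 4 * (1/2)^N" using bound2 \<open>N \<le> n\<close> \<open>N \<le> n'\<close>
        by (smt (verit))
      finally show "d (Sq n) (Sq n') < \<epsilon>" using N by simp
    qed
  qed
  then obtain x where limS: "limitin mtopology Sq x sequentially"
    using mc unfolding mcomplete_def by blast
  have gs: "summable (\<lambda>i. (1/2::real)^i)" by (rule summable_geometric) simp
  have smu: "summable mu"
    by (rule summable_comparison_test[OF _ gs]) (use mupos mule in \<open>auto intro!: exI[of _ 0] simp: less_imp_le\<close>)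
  define s where "s = suminf mu"
  have spos: "s > 0" unfolding s_def using smu mupos by (rule suminf_pos)
  define l where "l i = mu i / s" for i
  have lpos: "l i > 0" for i using mupos spos by (simp add: l_def)
  have lsum: "l sums 1"
    unfolding l_def using sums_divide[OF summable_sums[OF smu], of s] spos by (simp add: s_def)
  have Peq: "(\<Sum>i<n + 1. l i *\<^sub>R c i) = (1/s) *\<^sub>R Sq n + 0" for n
  proof -
    have "(1/s) *\<^sub>R Sq n = (\<Sum>i<Suc n. (1/s) *\<^sub>R (mu i *\<^sub>R c i))" by (simp only: Sqsum scaleR_sum_right)
    then show ?thesis by (simp add: l_def)
  qed
  have "limitin T ((\<lambda>y. (1/s) *\<^sub>R y + 0) \<circ> Sq) ((1/s) *\<^sub>R x + 0) sequentially"
    by (rule continuous_map_limit[OF aff]) (use limS Teq in simp)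
  moreover have "((\<lambda>y. (1/s) *\<^sub>R y + 0) \<circ> Sq) = (\<lambda>n. \<Sum>i<n + 1. l i *\<^sub>R c i)"
    using Peq by (simp only: o_def)
  ultimately have "limitin T (\<lambda>n. \<Sum>i<n + 1. l i *\<^sub>R c i) ((1/s) *\<^sub>R x + 0) sequentially"
    by simp
  then have lim: "limitin T (\<lambda>n. \<Sum>i<n. l i *\<^sub>R c i) ((1/s) *\<^sub>R x + 0) sequentially"
    by (rule limitin_sequentially_offset_rev)
  show ?thesis
    by (rule core[OF cs top aff _ _ lpos lsum lim]) (use D rc in auto)
qed


theorem theorem3p2:
  shows "(\<forall>(T :: 'a::real_vector topology) (C :: 'a set).
            tvs T \<and> separable_space T \<and> completely_metrizable_space T \<and>
            C \<noteq> {} \<and> cs_closed T C \<longrightarrow> fri T C \<noteq> {})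
       \<and> (\<forall>C :: ('y::real_normed_vector \<Rightarrow>\<^sub>L real) set.
            separable_space (euclidean :: 'y topology) \<and>
            C \<noteq> {} \<and> cs_closed weak_star C \<longrightarrow> fri weak_star C \<noteq> {})"
  using fspace_case wstar_case by blast

end
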